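(* Let $\epsilon>0$ be a constant. If the aspect ratio $\mathcal{A}=\mathcal{W}_{\max}/\mathcal{W}_{\min}$ of the input graph $G$ (with $n$ vertices) satisfies $\mathcal{A}=O(\mathrm{poly}(n))$, then the number of layer-contraction phases (calls to ContractLayer) performed by ParHAC$(G,\epsilon)$ is $O(\log n)$.
   Context: Setting: an undirected graph $G=(V,E,w)$ with $n$ vertices and positive edge weights; $\mathcal{W}_{\max}$ and $\mathcal{W}_{\min}$ are its largest and smallest edge weights. A partition of $V$ into clusters is maintained (initially singletons), together with the cluster graph $H$ whose vertices are the clusters, with an edge between clusters $X\neq Y$ iff $G$ has an edge between them, of average-linkage weight $\mathcal{W}(X,Y)=\sum_{(x,y)\in E,\,x\in X,\,y\in Y} w(x,y)/(|X||Y|)$. Algorithm ParHAC$(G,\epsilon)$: while $H$ has edges, let $W_{\max}$ be the current maximum edge weight of $H$ and call ContractLayer with threshold $T_L=W_{\max}/(1+\epsilon)$. A call to ContractLayer (a layer-contraction phase) performs a sequence of merges of edges of $H$ (replacing two adjacent clusters by their union, with weights of $H$ updated by the average-linkage formula), each merged edge having weight at least $T_L/(1+\epsilon)$ at the time of merging, and returns only when every edge of $H$ has weight less than $T_L$. *)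

theory Defs
  imports Main "HOL-Library.FuncSet" Complex_Main
begin

text \<open>An undirected weighted graph on vertices of type nat: finite vertex set V,
  symmetric irreflexive edge relation E (each undirected edge appears as both
  ordered pairs), positive symmetric edge weights w.\<close>
definition wf_graph :: "nat set \<Rightarrow> (nat \<times> nat) set \<Rightarrow> (nat \<Rightarrow> nat \<Rightarrow> real) \<Rightarrow> bool" where
  "wf_graph V E w \<longleftrightarrow> finite V \<and> E \<subseteq> V \<times> V \<and> sym E \<and> irrefl E
     \<and> (\<forall>(x,y)\<in>E. w x y > 0) \<and> (\<forall>x y. w x y = w y x)"

definition graph_Wmax :: "(nat \<times> nat) set \<Rightarrow> (nat \<Rightarrow> nat \<Rightarrow> real) \<Rightarrow> real" where
  "graph_Wmax E w = Max ((\<lambda>(x,y). w x y) ` E)"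

definition graph_Wmin :: "(nat \<times> nat) set \<Rightarrow> (nat \<Rightarrow> nat \<Rightarrow> real) \<Rightarrow> real" where
  "graph_Wmin E w = Min ((\<lambda>(x,y). w x y) ` E)"

text \<open>Average-linkage weight between two (disjoint) clusters; each undirected edge
  between X and Y is counted once as the ordered pair (x,y) with x in X, y in Y.\<close>
definition cw :: "(nat \<times> nat) set \<Rightarrow> (nat \<Rightarrow> nat \<Rightarrow> real) \<Rightarrow> nat set \<Rightarrow> nat set \<Rightarrow> real" where
  "cw E w X Y = (\<Sum>(x,y)\<in>E \<inter> (X \<times> Y). w x y) / (real (card X) * real (card Y))"

definition hedge :: "(nat \<times> nat) set \<Rightarrow> nat set set \<Rightarrow> nat set \<Rightarrow> nat set \<Rightarrow> bool" where
  "hedge E P X Y \<longleftrightarrow> X \<in> P \<and> Y \<in> P \<and> X \<noteq> Y \<and> (\<exists>x\<in>X. \<exists>y\<in>Y. (x,y) \<in> E)"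

definition has_hedge :: "(nat \<times> nat) set \<Rightarrow> nat set set \<Rightarrow> bool" where
  "has_hedge E P \<longleftrightarrow> (\<exists>X Y. hedge E P X Y)"

definition H_Wmax :: "(nat \<times> nat) set \<Rightarrow> (nat \<Rightarrow> nat \<Rightarrow> real) \<Rightarrow> nat set set \<Rightarrow> real" where
  "H_Wmax E w P = Max {cw E w X Y | X Y. hedge E P X Y}"

definition merge_step :: "(nat \<times> nat) set \<Rightarrow> (nat \<Rightarrow> nat \<Rightarrow> real) \<Rightarrow> real \<Rightarrow> real
    \<Rightarrow> nat set set \<Rightarrow> nat set set \<Rightarrow> bool" where
  "merge_step E w eps T P P' \<longleftrightarrow> (\<exists>X Y. hedge E P X Y \<and> cw E w X Y \<ge> T / (1 + eps)
       \<and> P' = insert (X \<union> Y) (P - {X, Y}))"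

definition contract_layer :: "(nat \<times> nat) set \<Rightarrow> (nat \<Rightarrow> nat \<Rightarrow> real) \<Rightarrow> real \<Rightarrow> real
    \<Rightarrow> nat set set \<Rightarrow> nat set set \<Rightarrow> bool" where
  "contract_layer E w eps T P P' \<longleftrightarrow> (merge_step E w eps T)\<^sup>*\<^sup>* P P'
       \<and> (\<forall>X Y. hedge E P' X Y \<longrightarrow> cw E w X Y < T)"

text \<open>A complete run of ParHAC(G,eps) performing exactly k calls of ContractLayer,
  with Ps i the partition before the (i+1)-st call.\<close>
definition parhac_run :: "nat set \<Rightarrow> (nat \<times> nat) set \<Rightarrow> (nat \<Rightarrow> nat \<Rightarrow> real) \<Rightarrow> real
    \<Rightarrow> (nat \<Rightarrow> nat set set) \<Rightarrow> nat \<Rightarrow> bool" where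
  "parhac_run V E w eps Ps k \<longleftrightarrow>
     Ps 0 = (\<lambda>v. {v}) ` V
     \<and> (\<forall>i<k. has_hedge E (Ps i)
          \<and> contract_layer E w eps (H_Wmax E w (Ps i) / (1 + eps)) (Ps i) (Ps (Suc i)))
     \<and> \<not> has_hedge E (Ps k)"

end

theory Submission
  imports Defs
begin

definition goodP :: "nat set \<Rightarrow> nat set set \<Rightarrow> bool" where
  "goodP V P \<longleftrightarrow> (\<forall>X\<in>P. X \<noteq> {} \<and> X \<subseteq> V)"

lemma merge_good: "merge_step E w eps T P P' \<Longrightarrow> goodP V P \<Longrightarrow> goodP V P'"
  unfolding merge_step_def goodP_def hedge_def by auto

lemma rtc_good: "(merge_step E w eps T)\<^sup>*\<^sup>* P P' \<Longrightarrow> goodP V P \<Longrightarrow> goodP V P'"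
  by (induction rule: rtranclp_induct) (auto intro: merge_good)

lemma run_good:
  assumes "parhac_run V E w eps Ps k" "i \<le> k"
  shows "goodP V (Ps i)"
  using assms(2)
proof (induction i)
  case 0
  then show ?case using assms(1) unfolding parhac_run_def goodP_def by auto
next
  case (Suc i)
  then have "goodP V (Ps i)" by simp
  moreover have "contract_layer E w eps (H_Wmax E w (Ps i) / (1 + eps)) (Ps i) (Ps (Suc i))"
    using assms(1) Suc.prems unfolding parhac_run_def by auto
  ultimately show ?case unfolding contract_layer_def using rtc_good by blast
qed

lemma hset_finite:
  assumes "finite V" "goodP V P"
  shows "finite {cw E w X Y | X Y. hedge E P X Y}"
proof -
  have "P \<subseteq> Pow V" using assms(2) unfolding goodP_def by auto
  then have fP: "finite P" using assms(1) finite_subset by blast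
  have "{cw E w X Y | X Y. hedge E P X Y} \<subseteq> (\<lambda>(X,Y). cw E w X Y) ` (P \<times> P)"
    unfolding hedge_def by auto
  then show ?thesis using fP finite_subset by blast
qed

lemma hmax_ge:
  assumes "finite V" "goodP V P" "hedge E P X Y"
  shows "cw E w X Y \<le> H_Wmax E w P"
  unfolding H_Wmax_def using hset_finite[OF assms(1,2)] assms(3)
  by (intro Max_ge) auto

lemma hmax_attained:
  assumes "finite V" "goodP V P" "has_hedge E P"
  shows "\<exists>X Y. hedge E P X Y \<and> H_Wmax E w P = cw E w X Y"
proof -
  have ne: "{cw E w X Y | X Y. hedge E P X Y} \<noteq> {}" using assms(3) unfolding has_hedge_def by auto
  have "H_Wmax E w P \<in> {cw E w X Y | X Y. hedge E P X Y}"
    unfolding H_Wmax_def using Max_in[OF hset_finite[OF assms(1,2)] ne] .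
  then show ?thesis by auto
qed

lemma E_finite: "wf_graph V E w \<Longrightarrow> finite E"
  unfolding wf_graph_def by (meson finite_SigmaI finite_subset)

lemma Wmin_le: "wf_graph V E w \<Longrightarrow> (x,y) \<in> E \<Longrightarrow> graph_Wmin E w \<le> w x y"
  unfolding graph_Wmin_def using E_finite by (intro Min_le) force+

lemma Wmax_ge: "wf_graph V E w \<Longrightarrow> (x,y) \<in> E \<Longrightarrow> w x y \<le> graph_Wmax E w"
  unfolding graph_Wmax_def using E_finite by (intro Max_ge) force+

lemma Wmin_pos: "wf_graph V E w \<Longrightarrow> E \<noteq> {} \<Longrightarrow> graph_Wmin E w > 0"
proof -
  assume a: "wf_graph V E w" "E \<noteq> {}"
  have "graph_Wmin E w \<in> (\<lambda>(x,y). w x y) ` E"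
    unfolding graph_Wmin_def using E_finite[OF a(1)] a(2) by (intro Min_in) auto
  then show ?thesis using a(1) unfolding wf_graph_def by auto
qed

lemma cw_lower:
  assumes g: "wf_graph V E w" and XV: "X \<subseteq> V" and YV: "Y \<subseteq> V"
    and xy: "x \<in> X" "y \<in> Y" "(x,y) \<in> E"
  shows "graph_Wmin E w / (real (card V) * real (card V)) \<le> cw E w X Y"
proof -
  have fV: "finite V" using g unfolding wf_graph_def by auto
  have fX: "finite X" "finite Y" using XV YV fV finite_subset by auto
  have cX: "card X > 0" "card Y > 0" using fX xy by (auto simp: card_gt_0_iff)
  have cle: "card X \<le> card V" "card Y \<le> card V" using XV YV fV card_mono by auto
  have pos: "\<forall>p\<in>E \<inter> (X \<times> Y). (\<lambda>(x,y). w x y) p \<ge> 0"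
    using g unfolding wf_graph_def by (auto simp: less_imp_le)
  have fS: "finite (E \<inter> (X \<times> Y))" using fX by auto
  have "w x y \<le> (\<Sum>(x,y)\<in>E \<inter> (X \<times> Y). w x y)"
    using member_le_sum[of "(x,y)" "E \<inter> (X \<times> Y)" "\<lambda>(x,y). w x y"] pos fS xy by auto
  then have s: "graph_Wmin E w \<le> (\<Sum>(x,y)\<in>E \<inter> (X \<times> Y). w x y)"
    using Wmin_le[OF g xy(3)] by linarith
  have wp: "graph_Wmin E w > 0" using Wmin_pos[OF g] xy by auto
  have d: "0 < real (card X) * real (card Y)" using cX by simp
  have d2: "real (card X) * real (card Y) \<le> real (card V) * real (card V)"
    using cle by (simp add: mult_mono)
  have "graph_Wmin E w / (real (card V) * real (card V)) \<le> graph_Wmin E w / (real (card X) * real (card Y))"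
    using wp d d2 by (intro divide_left_mono) auto
  also have "\<dots> \<le> cw E w X Y" unfolding cw_def using s d by (intro divide_right_mono) auto
  finally show ?thesis .
qed

lemma cw_upper:
  assumes g: "wf_graph V E w" and XV: "X \<subseteq> V" and YV: "Y \<subseteq> V"
    and ne: "X \<noteq> {}" "Y \<noteq> {}" and xy: "x0 \<in> X" "y0 \<in> Y" "(x0,y0) \<in> E"
  shows "cw E w X Y \<le> graph_Wmax E w"
proof -
  have fV: "finite V" using g unfolding wf_graph_def by auto
  have fX: "finite X" "finite Y" using XV YV fV finite_subset by auto
  have cX: "card X > 0" "card Y > 0" using fX ne by (auto simp: card_gt_0_iff)
  have "(\<Sum>(x,y)\<in>E \<inter> (X \<times> Y). w x y) \<le> (\<Sum>p\<in>E \<inter> (X \<times> Y). graph_Wmax E w)"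
    by (intro sum_mono) (auto intro: Wmax_ge[OF g])
  also have "\<dots> = real (card (E \<inter> (X \<times> Y))) * graph_Wmax E w" by simp
  also have "\<dots> \<le> real (card X * card Y) * graph_Wmax E w"
  proof (cases "E \<inter> (X \<times> Y) = {}")
    case True then show ?thesis
      using xy by auto
  next
    case False
    then obtain x y where "(x,y) \<in> E \<inter> (X \<times> Y)" by auto
    then have "graph_Wmax E w > 0" using Wmax_ge[OF g, of x y] g unfolding wf_graph_def by force
    moreover have "card (E \<inter> (X \<times> Y)) \<le> card (X \<times> Y)" using fX by (intro card_mono) auto
    ultimately have "real (card (E \<inter> (X \<times> Y))) \<le> real (card X * card Y)" "graph_Wmax E w > 0"
      by (simp_all add: card_cartesian_product del: of_nat_mult)
    then show ?thesis by (intro mult_right_mono) auto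
  qed
  finally have s: "(\<Sum>(x,y)\<in>E \<inter> (X \<times> Y). w x y) \<le> real (card X) * real (card Y) * graph_Wmax E w"
    by simp
  have d: "0 < real (card X) * real (card Y)" using cX by simp
  show ?thesis unfolding cw_def using s d by (simp add: divide_le_eq mult.commute)
qed

theorem mainTheorem5:
  fixes eps c :: real and d :: nat
  assumes "eps > 0"
  shows "\<exists>C::real. \<forall>V E w Ps k.
           wf_graph V E w
           \<and> (E \<noteq> {} \<longrightarrow> graph_Wmax E w / graph_Wmin E w \<le> c * real (card V) ^ d)
           \<and> parhac_run V E w eps Ps k
           \<longrightarrow> real k \<le> C * ln (real (card V))"
proof -
  define L where "L = ln (1 + eps)"
  define c' where "c' = max c 1"
  define C where "C = 1 / ln 2 + ln c' / (L * ln 2) + real (d + 2) / L"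
  have Lpos: "L > 0" unfolding L_def using assms by simp
  have c'1: "c' \<ge> 1" unfolding c'_def by simp
  have lc: "ln c' \<ge> 0" using c'1 by simp
  have Cnn: "C \<ge> 0" unfolding C_def using Lpos lc by (intro add_nonneg_nonneg divide_nonneg_pos) auto
  show ?thesis
  proof (intro exI[of _ C] allI impI, elim conjE)
    fix V E w Ps k
    assume g: "wf_graph V E w"
      and rat: "E \<noteq> {} \<longrightarrow> graph_Wmax E w / graph_Wmin E w \<le> c * real (card V) ^ d"
      and run: "parhac_run V E w eps Ps k"
    define n where "n = card V"
    have fV: "finite V" using g unfolding wf_graph_def by auto
    have lnn: "ln (real n) \<ge> 0" by (cases "n = 0") auto
    show "real k \<le> C * ln (real (card V))"
    proof (cases "k = 0")
      case True
      then show ?thesis using Cnn lnn n_def by simp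
    next
      case False
      define M where "M i = H_Wmax E w (Ps i)" for i
      have hh: "has_hedge E (Ps i)" if "i < k" for i using run that unfolding parhac_run_def by auto
      have cl: "contract_layer E w eps (M i / (1 + eps)) (Ps i) (Ps (Suc i))" if "i < k" for i
        using run that unfolding parhac_run_def M_def by auto
      have gd: "goodP V (Ps i)" if "i \<le> k" for i using run_good[OF run that] .
      obtain X0 Y0 where h0: "hedge E (Ps 0) X0 Y0" "M 0 = cw E w X0 Y0"
        using hmax_attained[OF fV gd[of 0] hh[of 0], where w=w] False M_def by auto
      then obtain x0 y0 where xy0: "x0 \<in> X0" "y0 \<in> Y0" "(x0,y0) \<in> E" unfolding hedge_def by auto
      have En: "E \<noteq> {}" using xy0 by auto
      have n2: "n \<ge> 2"
      proof -
        have "x0 \<noteq> y0" "x0 \<in> V" "y0 \<in> V" using g xy0(3) unfolding wf_graph_def irrefl_def by auto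
        then have "{x0, y0} \<subseteq> V" by auto
        then have "card {x0,y0} \<le> n" unfolding n_def using fV card_mono by blast
        then show ?thesis using \<open>x0 \<noteq> y0\<close> by simp
      qed
      have M0: "M 0 \<le> graph_Wmax E w"
        using h0 xy0 gd[of 0] cw_upper[OF g, of X0 Y0 x0 y0] unfolding hedge_def goodP_def by auto
      have dec: "M i * (1 + eps) ^ i \<le> M 0" if "i < k" for i
        using that
      proof (induction i)
        case 0 then show ?case by simp
      next
        case (Suc i)
        obtain X Y where h: "hedge E (Ps (Suc i)) X Y" "M (Suc i) = cw E w X Y"
          using hmax_attained[OF fV gd[of "Suc i"] hh[of "Suc i"], where w=w] Suc.prems M_def by auto
        have "cw E w X Y < M i / (1 + eps)" using cl[of i] Suc.prems h(1) unfolding contract_layer_def by auto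
        then have "M (Suc i) * (1 + eps) < M i" using h(2) assms by (simp add: field_simps)
        then have "M (Suc i) * (1 + eps) * (1 + eps) ^ i \<le> M i * (1 + eps) ^ i"
          using assms by (intro mult_right_mono) auto
        also have "\<dots> \<le> M 0" using Suc by simp
        finally show ?case by (simp add: mult_ac)
      qed
      define j where "j = k - 1"
      have jk: "j < k" "k = Suc j" using False unfolding j_def by auto
      obtain X Y where hj: "hedge E (Ps j) X Y" "M j = cw E w X Y"
        using hmax_attained[OF fV gd[of j] hh[of j], where w=w] jk M_def by auto
      then obtain x y where xy: "x \<in> X" "y \<in> Y" "(x,y) \<in> E" unfolding hedge_def by auto
      have Mj: "graph_Wmin E w / (real n * real n) \<le> M j"
        using hj xy gd[of j] jk cw_lower[OF g, of X Y x y] unfolding hedge_def goodP_def n_def by auto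
      have wmin: "graph_Wmin E w > 0" using Wmin_pos[OF g En] .
      have npos: "real n > 0" using n2 by simp
      have Wr: "graph_Wmax E w \<le> c * real n ^ d * graph_Wmin E w"
        using rat En wmin n_def by (simp add: divide_le_eq)
      have "graph_Wmin E w / (real n * real n) * (1 + eps) ^ j \<le> M j * (1 + eps) ^ j"
        using Mj assms by (intro mult_right_mono) auto
      also have "\<dots> \<le> c * real n ^ d * graph_Wmin E w" using dec[OF jk(1)] M0 Wr by linarith
      finally have "graph_Wmin E w * (1 + eps) ^ j \<le> graph_Wmin E w * (c * real n ^ (d + 2))"
        using npos by (simp add: field_simps power2_eq_square)
      then have "(1 + eps) ^ j \<le> c * real n ^ (d + 2)" using wmin by simp
      also have "\<dots> \<le> c' * real n ^ (d + 2)" unfolding c'_def by (intro mult_right_mono) auto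
      finally have pw: "(1 + eps) ^ j \<le> c' * real n ^ (d + 2)" .
      have "ln ((1 + eps) ^ j) \<le> ln (c' * real n ^ (d + 2))"
        using pw assms c'1 npos by (subst ln_le_cancel_iff) auto
      then have lg: "real j * L \<le> ln c' + real (d + 2) * ln (real n)"
        unfolding L_def using assms c'1 npos by (simp add: ln_mult ln_realpow algebra_simps)
      define r where "r = ln (real n) / ln 2"
      have r1: "r \<ge> 1" unfolding r_def using n2 by simp
      have lnr: "ln (real n) = r * ln 2" unfolding r_def by simp
      have "real j \<le> ln c' / L + real (d + 2) * ln (real n) / L"
        using lg Lpos by (simp add: field_simps)
      also have "\<dots> \<le> r * (ln c' / L) + real (d + 2) * ln (real n) / L"
        using r1 lc Lpos mult_right_mono[OF r1, of "ln c' / L"] by simp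
      finally have "real k \<le> r + r * (ln c' / L) + real (d + 2) * ln (real n) / L"
        using jk r1 by simp
      also have "\<dots> = C * ln (real n)"
        unfolding C_def lnr by (simp add: field_simps)
      finally show ?thesis unfolding n_def .
    qed
  qed
qed

end
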